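(* Let $\sigma\colon\Sigma\to\Sigma$ be a topologically mixing two-sided subshift of finite type with a Gibbs measure $\mu$, $f\colon\Sigma\to\mathbb R$ Lipschitz with $\int f\,d\mu=0$, $F(x,r)=(\sigma x,r+f(x))$ and $\nu=\mu\times\mathrm{Leb}$. If $\Phi\in L^\infty(\nu)$ is a global observable, then $\Phi\circ F$ is a global observable and $\nu_{\mathrm{av}}(\Phi\circ F)=\nu_{\mathrm{av}}(\Phi)$.
   Context: A global observable is a $\Phi\in L^\infty(\nu)$ for which the limit $\nu_{\mathrm{av}}(\Phi)=\lim_{R\to\infty}\frac1{2R}\int_{\Sigma\times[-R,R]}\Phi\,d\nu$ exists. Lipschitz is w.r.t. $d_\theta(x,y)=\theta^{\max\{j:\ x_i=y_i\ \forall|i|<j\}}$ for some $0<\theta<1$. *)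

theory Defs
  imports "HOL-Probability.Probability"
begin

definition SFT :: "('a \<Rightarrow> 'a \<Rightarrow> bool) \<Rightarrow> (int \<Rightarrow> 'a) set" where
  "SFT A = {x. \<forall>i. A (x i) (x (i + 1))}"

definition shift :: "(int \<Rightarrow> 'a) \<Rightarrow> (int \<Rightarrow> 'a)" where
  "shift x = (\<lambda>i. x (i + 1))"

definition dtheta :: "real \<Rightarrow> (int \<Rightarrow> 'a) \<Rightarrow> (int \<Rightarrow> 'a) \<Rightarrow> real" where
  "dtheta \<theta> x y =
     (if x = y then 0 else \<theta> ^ (GREATEST j::nat. \<forall>i::int. \<bar>i\<bar> < int j \<longrightarrow> x i = y i))"

definition open_in_shift :: "real \<Rightarrow> (int \<Rightarrow> 'a) set \<Rightarrow> (int \<Rightarrow> 'a) set \<Rightarrow> bool" where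
  "open_in_shift \<theta> S U \<longleftrightarrow> U \<subseteq> S \<and>
     (\<forall>x\<in>U. \<exists>e>0. \<forall>y\<in>S. dtheta \<theta> x y < e \<longrightarrow> y \<in> U)"

definition top_mixing :: "real \<Rightarrow> (int \<Rightarrow> 'a) set \<Rightarrow> bool" where
  "top_mixing \<theta> S \<longleftrightarrow>
     (\<forall>U V. open_in_shift \<theta> S U \<and> open_in_shift \<theta> S V \<and> U \<noteq> {} \<and> V \<noteq> {} \<longrightarrow>
        (\<exists>N. \<forall>n\<ge>N. (shift ^^ n) ` U \<inter> V \<noteq> {}))"

definition lipschitz_shift :: "real \<Rightarrow> (int \<Rightarrow> 'a) set \<Rightarrow> ((int \<Rightarrow> 'a) \<Rightarrow> real) \<Rightarrow> bool" where
  "lipschitz_shift \<theta> S f \<longleftrightarrow> (\<exists>L. \<forall>x\<in>S. \<forall>y\<in>S. \<bar>f x - f y\<bar> \<le> L * dtheta \<theta> x y)"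

definition cyl :: "(int \<Rightarrow> 'a) set \<Rightarrow> (int \<Rightarrow> 'a) \<Rightarrow> nat \<Rightarrow> (int \<Rightarrow> 'a) set" where
  "cyl S x n = {y\<in>S. \<forall>i::nat. i < n \<longrightarrow> y (int i) = x (int i)}"

definition cylinders :: "(int \<Rightarrow> 'a) set \<Rightarrow> (int \<Rightarrow> 'a) set set" where
  "cylinders S = {{y\<in>S. \<forall>i\<in>I. y i = w i} | I w. finite I}"

definition birkhoff_sum :: "((int \<Rightarrow> 'a) \<Rightarrow> real) \<Rightarrow> nat \<Rightarrow> (int \<Rightarrow> 'a) \<Rightarrow> real" where
  "birkhoff_sum \<phi> n x = (\<Sum>k<n. \<phi> ((shift ^^ k) x))"

definition gibbs_measure :: "(int \<Rightarrow> 'a) set \<Rightarrow> (int \<Rightarrow> 'a) measure \<Rightarrow> bool" where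
  "gibbs_measure S \<mu> \<longleftrightarrow>
     prob_space \<mu> \<and> space \<mu> = S \<and> sets \<mu> = sigma_sets S (cylinders S) \<and>
     shift \<in> measurable \<mu> \<mu> \<and> distr \<mu> \<mu> shift = \<mu> \<and>
     (\<exists>\<phi> \<theta>' P C. 0 < \<theta>' \<and> \<theta>' < 1 \<and> lipschitz_shift \<theta>' S \<phi> \<and> C \<ge> 1 \<and>
        (\<forall>x\<in>S. \<forall>n\<ge>1.
           exp (birkhoff_sum \<phi> n x - real n * P) / C \<le> measure \<mu> (cyl S x n) \<and>
           measure \<mu> (cyl S x n) \<le> C * exp (birkhoff_sum \<phi> n x - real n * P)))"

definition avg_R :: "('b \<times> real) measure \<Rightarrow> 'b set \<Rightarrow> ('b \<times> real \<Rightarrow> real) \<Rightarrow> real \<Rightarrow> real" where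
  "avg_R \<nu> S \<Phi> R = (set_lebesgue_integral \<nu> (S \<times> {-R..R}) \<Phi>) / (2 * R)"

definition global_observable :: "('b \<times> real) measure \<Rightarrow> 'b set \<Rightarrow> ('b \<times> real \<Rightarrow> real) \<Rightarrow> bool" where
  "global_observable \<nu> S \<Phi> \<longleftrightarrow>
     \<Phi> \<in> borel_measurable \<nu> \<and> (\<exists>B. AE p in \<nu>. \<bar>\<Phi> p\<bar> \<le> B) \<and>
     (\<exists>L. (avg_R \<nu> S \<Phi> \<longlongrightarrow> L) at_top)"

definition nu_av :: "('b \<times> real) measure \<Rightarrow> 'b set \<Rightarrow> ('b \<times> real \<Rightarrow> real) \<Rightarrow> real" where
  "nu_av \<nu> S \<Phi> = Lim at_top (avg_R \<nu> S \<Phi>)"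

end

theory Submission
  imports Defs
begin


lemma F_meas:
  fixes f :: "'a \<Rightarrow> real"
  assumes "sh \<in> measurable \<mu> \<mu>" "f \<in> borel_measurable \<mu>"
  shows "(\<lambda>p. (sh (fst p), snd p + f (fst p))) \<in> measurable (\<mu> \<Otimes>\<^sub>M lborel) (\<mu> \<Otimes>\<^sub>M lborel)"
  using assms by measurable

lemma nn_pres:
  fixes f :: "'a \<Rightarrow> real" and h :: "'a \<times> real \<Rightarrow> ennreal"
  assumes "prob_space \<mu>" "sh \<in> measurable \<mu> \<mu>" "distr \<mu> \<mu> sh = \<mu>" "f \<in> borel_measurable \<mu>"
    and h: "h \<in> borel_measurable (\<mu> \<Otimes>\<^sub>M lborel)"
  shows "(\<integral>\<^sup>+p. h (sh (fst p), snd p + f (fst p)) \<partial>(\<mu> \<Otimes>\<^sub>M lborel)) = integral\<^sup>N (\<mu> \<Otimes>\<^sub>M lborel) h"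
proof -
  have Fm: "(\<lambda>p. (sh (fst p), snd p + f (fst p))) \<in> measurable (\<mu> \<Otimes>\<^sub>M lborel) (\<mu> \<Otimes>\<^sub>M lborel)"
    using F_meas assms by blast
  have hF: "(\<lambda>p. h (sh (fst p), snd p + f (fst p))) \<in> borel_measurable (\<mu> \<Otimes>\<^sub>M lborel)"
    using measurable_comp[OF Fm h] by (simp add: comp_def)
  have "(\<integral>\<^sup>+p. h (sh (fst p), snd p + f (fst p)) \<partial>(\<mu> \<Otimes>\<^sub>M lborel))
      = (\<integral>\<^sup>+x. \<integral>\<^sup>+r. h (sh x, r + f x) \<partial>lborel \<partial>\<mu>)"
    using lborel.nn_integral_fst[OF hF] by simp
  also have "\<dots> = (\<integral>\<^sup>+x. \<integral>\<^sup>+r. h (sh x, r) \<partial>lborel \<partial>\<mu>)"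
  proof (rule nn_integral_cong)
    fix x assume x: "x \<in> space \<mu>"
    have "sh x \<in> space \<mu>" using assms(2) x by (meson measurable_space)
    then have m: "(\<lambda>r. h (sh x, r)) \<in> borel_measurable borel"
      using measurable_Pair2[OF h] by simp
    show "(\<integral>\<^sup>+r. h (sh x, r + f x) \<partial>lborel) = (\<integral>\<^sup>+r. h (sh x, r) \<partial>lborel)"
      using nn_integral_real_affine[OF m, of 1 "f x"] by (simp add: add.commute)
  qed
  also have "\<dots> = (\<integral>\<^sup>+y. \<integral>\<^sup>+r. h (y, r) \<partial>lborel \<partial>(distr \<mu> \<mu> sh))"
    by (rule nn_integral_distr[symmetric]) (use assms lborel.borel_measurable_nn_integral_fst[OF h] in auto)
  also have "\<dots> = integral\<^sup>N (\<mu> \<Otimes>\<^sub>M lborel) h"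
    using lborel.nn_integral_fst[OF h] assms(3) by simp
  finally show ?thesis .
qed

lemma distr_pres:
  fixes f :: "'a \<Rightarrow> real"
  assumes "prob_space \<mu>" "sh \<in> measurable \<mu> \<mu>" "distr \<mu> \<mu> sh = \<mu>" "f \<in> borel_measurable \<mu>"
  shows "distr (\<mu> \<Otimes>\<^sub>M lborel) (\<mu> \<Otimes>\<^sub>M lborel) (\<lambda>p. (sh (fst p), snd p + f (fst p))) = \<mu> \<Otimes>\<^sub>M lborel"
proof (rule measure_eqI)
  fix X assume X: "X \<in> sets (distr (\<mu> \<Otimes>\<^sub>M lborel) (\<mu> \<Otimes>\<^sub>M lborel) (\<lambda>p. (sh (fst p), snd p + f (fst p))))"
  then have X': "X \<in> sets (\<mu> \<Otimes>\<^sub>M lborel)" by simp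
  have Fm: "(\<lambda>p. (sh (fst p), snd p + f (fst p))) \<in> measurable (\<mu> \<Otimes>\<^sub>M lborel) (\<mu> \<Otimes>\<^sub>M lborel)"
    using F_meas assms by blast
  have pre: "(\<lambda>p. (sh (fst p), snd p + f (fst p))) -` X \<inter> space (\<mu> \<Otimes>\<^sub>M lborel) \<in> sets (\<mu> \<Otimes>\<^sub>M lborel)"
    using Fm X' by (rule measurable_sets)
  have "emeasure (distr (\<mu> \<Otimes>\<^sub>M lborel) (\<mu> \<Otimes>\<^sub>M lborel) (\<lambda>p. (sh (fst p), snd p + f (fst p)))) X
     = emeasure (\<mu> \<Otimes>\<^sub>M lborel) ((\<lambda>p. (sh (fst p), snd p + f (fst p))) -` X \<inter> space (\<mu> \<Otimes>\<^sub>M lborel))"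
    using Fm X' by (rule emeasure_distr)
  also have "\<dots> = (\<integral>\<^sup>+p. indicator ((\<lambda>p. (sh (fst p), snd p + f (fst p))) -` X \<inter> space (\<mu> \<Otimes>\<^sub>M lborel)) p \<partial>(\<mu> \<Otimes>\<^sub>M lborel))"
    by (rule nn_integral_indicator[symmetric, OF pre])
  also have "\<dots> = (\<integral>\<^sup>+p. indicator X (sh (fst p), snd p + f (fst p)) \<partial>(\<mu> \<Otimes>\<^sub>M lborel))"
    by (rule nn_integral_cong) (simp add: indicator_def)
  also have "\<dots> = (\<integral>\<^sup>+p. indicator X p \<partial>(\<mu> \<Otimes>\<^sub>M lborel))"
    using nn_pres[OF assms, of "indicator X"] X' by simp
  also have "\<dots> = emeasure (\<mu> \<Otimes>\<^sub>M lborel) X" using X' by simp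
  finally show "emeasure (distr (\<mu> \<Otimes>\<^sub>M lborel) (\<mu> \<Otimes>\<^sub>M lborel) (\<lambda>p. (sh (fst p), snd p + f (fst p)))) X = emeasure (\<mu> \<Otimes>\<^sub>M lborel) X" .
qed simp

lemma emeasure_strip:
  fixes a b :: real
  assumes "prob_space \<mu>" "a \<le> b"
  shows "emeasure (\<mu> \<Otimes>\<^sub>M lborel) (space \<mu> \<times> {a..b}) = ennreal (b - a)"
    and "measure (\<mu> \<Otimes>\<^sub>M lborel) (space \<mu> \<times> {a..b}) = b - a"
proof -
  interpret prob_space \<mu> by fact
  show e: "emeasure (\<mu> \<Otimes>\<^sub>M lborel) (space \<mu> \<times> {a..b}) = ennreal (b - a)"
    using assms by (simp add: lborel.emeasure_pair_measure_Times emeasure_space_1)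
  show "measure (\<mu> \<Otimes>\<^sub>M lborel) (space \<mu> \<times> {a..b}) = b - a"
    using e assms by (simp add: measure_def)
qed

lemma integrable_strip:
  fixes g :: "'a \<times> real \<Rightarrow> real" and B a b :: real
  assumes "prob_space \<mu>" "g \<in> borel_measurable (\<mu> \<Otimes>\<^sub>M lborel)"
    and "AE p in \<mu> \<Otimes>\<^sub>M lborel. \<bar>g p\<bar> \<le> B"
    and "\<And>x r. x \<in> space \<mu> \<Longrightarrow> r \<notin> {a..b} \<Longrightarrow> g (x, r) = 0"
  shows "integrable (\<mu> \<Otimes>\<^sub>M lborel) g"
proof (cases "a \<le> b")
  case True
  have I: "integrable (\<mu> \<Otimes>\<^sub>M lborel) (\<lambda>p. B * indicator (space \<mu> \<times> {a..b}) p)"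
    using emeasure_strip[OF assms(1) True]
    by (intro integrable_mult_right integrable_real_indicator) auto
  have "AE p in \<mu> \<Otimes>\<^sub>M lborel. norm (g p) \<le> norm (B * indicator (space \<mu> \<times> {a..b}) p)"
      using assms(3)
    proof (rule AE_mp, intro AE_I2 impI)
      fix p assume p: "p \<in> space (\<mu> \<Otimes>\<^sub>M lborel)" and b: "\<bar>g p\<bar> \<le> B"
      obtain x r where pe: "p = (x, r)" by fastforce
      have x: "x \<in> space \<mu>" using p pe by (simp add: space_pair_measure)
      show "norm (g p) \<le> norm (B * indicator (space \<mu> \<times> {a..b}) p)"
        using b assms(4)[OF x, of r] x pe by (cases "r \<in> {a..b}") (auto simp: indicator_def)
    qed
  from Bochner_Integration.integrable_bound[OF I assms(2) this] show ?thesis .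
next
  case False
  have z: "g p = 0" if "p \<in> space (\<mu> \<Otimes>\<^sub>M lborel)" for p
    using that False assms(4)[of "fst p" "snd p"] by (auto simp: space_pair_measure)
  have "integrable (\<mu> \<Otimes>\<^sub>M lborel) (\<lambda>_. 0::real)" by simp
  then show ?thesis
   using Bochner_Integration.integrable_cong[of "\<mu> \<Otimes>\<^sub>M lborel" "\<mu> \<Otimes>\<^sub>M lborel" "\<lambda>_. 0::real" g] z by force
qed

lemma ind_diff:
  fixes R M c r :: real
  assumes "\<bar>c\<bar> \<le> M"
  shows "\<bar>indicator {-R..R} r - indicator {-R..R} (r + c)\<bar>
     \<le> indicator {-R-M..-R+M} r + (indicator {R-M..R+M} r :: real)"
  using assms by (auto simp: indicator_def)


theorem lemma3p2:
  fixes A :: "'a::finite \<Rightarrow> 'a \<Rightarrow> bool"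
    and \<theta> :: real
    and \<mu> :: "(int \<Rightarrow> 'a) measure"
    and f :: "(int \<Rightarrow> 'a) \<Rightarrow> real"
    and \<Phi> :: "(int \<Rightarrow> 'a) \<times> real \<Rightarrow> real"
  assumes theta: "0 < \<theta>" "\<theta> < 1"
    and mixing: "top_mixing \<theta> (SFT A)"
    and gibbs: "gibbs_measure (SFT A) \<mu>"
    and f_lip: "lipschitz_shift \<theta> (SFT A) f"
    and f_meas: "f \<in> borel_measurable \<mu>"
    and f_mean: "integral\<^sup>L \<mu> f = 0"
    and glob: "global_observable (\<mu> \<Otimes>\<^sub>M lborel) (SFT A) \<Phi>"
  shows "global_observable (\<mu> \<Otimes>\<^sub>M lborel) (SFT A) (\<Phi> \<circ> (\<lambda>(x, r). (shift x, r + f x)))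
    \<and> nu_av (\<mu> \<Otimes>\<^sub>M lborel) (SFT A) (\<Phi> \<circ> (\<lambda>(x, r). (shift x, r + f x)))
        = nu_av (\<mu> \<Otimes>\<^sub>M lborel) (SFT A) \<Phi>"
proof -
  let ?S = "SFT A"
  let ?\<nu> = "\<mu> \<Otimes>\<^sub>M lborel"
  define F where "F = (\<lambda>(x::int\<Rightarrow>'a, r::real). (shift x, r + f x))"
  have F_eq: "F = (\<lambda>p. (shift (fst p), snd p + f (fst p)))"
    by (auto simp: F_def split_beta)
  from gibbs have P: "prob_space \<mu>" and Sp: "space \<mu> = ?S" and shm: "shift \<in> measurable \<mu> \<mu>"
    and shd: "distr \<mu> \<mu> shift = \<mu>"
    unfolding gibbs_measure_def by auto
  interpret prob_space \<mu> by fact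
  have Fm: "F \<in> measurable ?\<nu> ?\<nu>" unfolding F_eq using F_meas[OF shm f_meas] .
  have Fd: "distr ?\<nu> ?\<nu> F = ?\<nu>" unfolding F_eq using distr_pres[OF P shm shd f_meas] .
  from glob obtain B0 L0 where \<Phi>m: "\<Phi> \<in> borel_measurable ?\<nu>" and B0: "AE p in ?\<nu>. \<bar>\<Phi> p\<bar> \<le> B0"
    and lim: "(avg_R ?\<nu> ?S \<Phi> \<longlongrightarrow> L0) at_top"
    unfolding global_observable_def by blast
  define B where "B = \<bar>B0\<bar>"
  have B: "AE p in ?\<nu>. \<bar>\<Phi> p\<bar> \<le> B" using B0 by eventually_elim (auto simp: B_def)
  have B00: "B \<ge> 0" by (simp add: B_def)
  have \<Phi>Fm: "(\<lambda>p. \<Phi> (F p)) \<in> borel_measurable ?\<nu>"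
    using measurable_comp[OF Fm \<Phi>m] by (simp add: comp_def)
  have BF: "AE p in ?\<nu>. \<bar>\<Phi> (F p)\<bar> \<le> B"
  proof -
    have "AE p in distr ?\<nu> ?\<nu> F. \<bar>\<Phi> p\<bar> \<le> B" unfolding Fd by (rule B)
    moreover have "{p \<in> space ?\<nu>. \<bar>\<Phi> p\<bar> \<le> B} \<in> sets ?\<nu>" using \<Phi>m by measurable
    ultimately show ?thesis using AE_distr_iff[OF Fm, of "\<lambda>p. \<bar>\<Phi> p\<bar> \<le> B"] by simp
  qed
  obtain M where M0: "M \<ge> 0" and M: "\<And>x. x \<in> ?S \<Longrightarrow> \<bar>f x\<bar> \<le> M"
  proof -
    from f_lip obtain L where L: "\<forall>x\<in>?S. \<forall>y\<in>?S. \<bar>f x - f y\<bar> \<le> L * dtheta \<theta> x y"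
      unfolding lipschitz_shift_def by blast
    have ne: "?S \<noteq> {}" using not_empty Sp by simp
    then obtain x0 where x0: "x0 \<in> ?S" by blast
    have d: "0 \<le> dtheta \<theta> x y \<and> dtheta \<theta> x y \<le> 1" for x y
      using theta by (simp add: dtheta_def power_le_one)
    have "\<bar>f x\<bar> \<le> \<bar>f x0\<bar> + \<bar>L\<bar>" if "x \<in> ?S" for x
    proof -
      have "\<bar>f x - f x0\<bar> \<le> L * dtheta \<theta> x x0" using L that x0 by blast
      also have "\<dots> \<le> \<bar>L\<bar> * dtheta \<theta> x x0" using d[of x x0] by (intro mult_right_mono) auto
      also have "\<dots> \<le> \<bar>L\<bar>" using d[of x x0] by (simp add: mult_left_le)
      finally show ?thesis by linarith
    qed
    then show ?thesis using that[of "\<bar>f x0\<bar> + \<bar>L\<bar>"] by auto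
  qed
  have key: "\<bar>avg_R ?\<nu> ?S (\<Phi> \<circ> F) R - avg_R ?\<nu> ?S \<Phi> R\<bar> \<le> 2 * B * M / R" if R: "R > 0" for R
  proof -
    define X where "X = ?S \<times> {-R..R}"
    have Xs: "X \<in> sets ?\<nu>" unfolding X_def Sp[symmetric] by (intro pair_measureI) auto
    define \<psi> where "\<psi> p = indicator X p * \<Phi> p" for p
    have \<psi>m: "\<psi> \<in> borel_measurable ?\<nu>" unfolding \<psi>_def[abs_def]
      by (intro borel_measurable_times borel_measurable_indicator \<Phi>m Xs)
    have \<psi>i: "integrable ?\<nu> \<psi>"
    proof (rule integrable_strip[OF P \<psi>m])
      show "AE p in ?\<nu>. \<bar>\<psi> p\<bar> \<le> B" using B by eventually_elim (auto simp: \<psi>_def indicator_def B00)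
      show "\<psi> (x, r) = 0" if "x \<in> space \<mu>" "r \<notin> {-R..R}" for x r
        using that by (simp add: \<psi>_def X_def)
    qed
    have \<psi>Fi: "integrable ?\<nu> (\<lambda>p. \<psi> (F p))"
      using integrable_distr_eq[OF Fm \<psi>m] Fd \<psi>i by simp
    have \<psi>Fint: "integral\<^sup>L ?\<nu> (\<lambda>p. \<psi> (F p)) = integral\<^sup>L ?\<nu> \<psi>"
      using integral_distr[OF Fm \<psi>m] Fd by simp
    define \<phi> where "\<phi> p = indicator X p * \<Phi> (F p)" for p
    have \<phi>m: "\<phi> \<in> borel_measurable ?\<nu>" unfolding \<phi>_def[abs_def]
      by (intro borel_measurable_times borel_measurable_indicator \<Phi>Fm Xs)
    have \<phi>i: "integrable ?\<nu> \<phi>"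
    proof (rule integrable_strip[OF P \<phi>m])
      show "AE p in ?\<nu>. \<bar>\<phi> p\<bar> \<le> B" using BF by eventually_elim (auto simp: \<phi>_def indicator_def B00)
      show "\<phi> (x, r) = 0" if "x \<in> space \<mu>" "r \<notin> {-R..R}" for x r
        using that by (simp add: \<phi>_def X_def)
    qed
    define D where "D p = \<phi> p - \<psi> (F p)" for p
    have Di: "integrable ?\<nu> D" unfolding D_def[abs_def] using \<phi>i \<psi>Fi by (rule Bochner_Integration.integrable_diff)
    have intD: "integral\<^sup>L ?\<nu> D = integral\<^sup>L ?\<nu> \<phi> - integral\<^sup>L ?\<nu> \<psi>"
      unfolding D_def[abs_def] using \<phi>i \<psi>Fi \<psi>Fint by (simp add: Bochner_Integration.integral_diff)
    define G where "G p = B * (indicator (space \<mu> \<times> {-R-M..-R+M}) p + indicator (space \<mu> \<times> {R-M..R+M}) p)" for p :: "(int \<Rightarrow> 'a) \<times> real"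
    have le1: "-R-M \<le> -R+M" and le2: "R-M \<le> R+M" using M0 by auto
    have s1: "space \<mu> \<times> {-R-M..-R+M} \<in> sets ?\<nu>" by (intro pair_measureI) auto
    have s2: "space \<mu> \<times> {R-M..R+M} \<in> sets ?\<nu>" by (intro pair_measureI) auto
    have i1: "integrable ?\<nu> (indicator (space \<mu> \<times> {-R-M..-R+M}) :: _ \<Rightarrow> real)"
      using emeasure_strip(1)[OF P le1] s1 by (intro integrable_real_indicator) auto
    have i2: "integrable ?\<nu> (indicator (space \<mu> \<times> {R-M..R+M}) :: _ \<Rightarrow> real)"
      using emeasure_strip(1)[OF P le2] s2 by (intro integrable_real_indicator) auto
    have Gi: "integrable ?\<nu> G" unfolding G_def[abs_def]
      by (intro integrable_mult_right Bochner_Integration.integrable_add i1 i2)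
    have intG: "integral\<^sup>L ?\<nu> G = B * (4 * M)"
    proof -
      have "integral\<^sup>L ?\<nu> G = B * (integral\<^sup>L ?\<nu> (indicator (space \<mu> \<times> {-R-M..-R+M}) :: _ \<Rightarrow> real)
          + integral\<^sup>L ?\<nu> (indicator (space \<mu> \<times> {R-M..R+M}) :: _ \<Rightarrow> real))"
        unfolding G_def[abs_def] using i1 i2 by (simp add: Bochner_Integration.integral_add)
      also have "\<dots> = B * (4 * M)"
        using emeasure_strip(2)[OF P le1] emeasure_strip(2)[OF P le2] s1 s2
        by (simp add: Int_absorb2 sets.sets_into_space)
      finally show ?thesis .
    qed
    have DG: "AE p in ?\<nu>. \<bar>D p\<bar> \<le> G p"
      using BF
    proof (rule AE_mp, intro AE_I2 impI)
      fix p assume elim: "p \<in> space ?\<nu>" "\<bar>\<Phi> (F p)\<bar> \<le> B"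
      obtain x r where pe: "p = (x, r)" by fastforce
      have x: "x \<in> space \<mu>" using elim(1) pe by (simp add: space_pair_measure)
      have sx: "shift x \<in> space \<mu>" by (rule measurable_space[OF shm x])
      have fx: "\<bar>f x\<bar> \<le> M" using M x Sp by auto
      have "D p = (indicator {-R..R} r - indicator {-R..R} (r + f x)) * \<Phi> (F p)"
        using x sx Sp unfolding D_def \<phi>_def \<psi>_def X_def pe F_eq
        by (simp add: indicator_def left_diff_distrib)
      then have "\<bar>D p\<bar> = \<bar>indicator {-R..R} r - indicator {-R..R} (r + f x)\<bar> * \<bar>\<Phi> (F p)\<bar>"
        by (simp add: abs_mult)
      also have "\<dots> \<le> (indicator {-R-M..-R+M} r + indicator {R-M..R+M} r) * B"
        using ind_diff[OF fx, of R r] elim(2) by (intro mult_mono) auto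
      also have "\<dots> = G p" using x unfolding G_def pe by (simp add: indicator_def)
      finally show "\<bar>D p\<bar> \<le> G p" .
    qed
    have "\<bar>integral\<^sup>L ?\<nu> D\<bar> \<le> integral\<^sup>L ?\<nu> (\<lambda>p. \<bar>D p\<bar>)" by (rule integral_abs_bound)
    also have "\<dots> \<le> integral\<^sup>L ?\<nu> G"
      by (rule integral_mono_AE[OF integrable_abs[OF Di] Gi DG])
    finally have bnd: "\<bar>integral\<^sup>L ?\<nu> \<phi> - integral\<^sup>L ?\<nu> \<psi>\<bar> \<le> B * (4 * M)" using intD intG by simp
    have e1: "avg_R ?\<nu> ?S (\<Phi> \<circ> F) R = integral\<^sup>L ?\<nu> \<phi> / (2 * R)"
      unfolding avg_R_def set_lebesgue_integral_def \<phi>_def[abs_def] X_def by (simp add: comp_def)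
    have e2: "avg_R ?\<nu> ?S \<Phi> R = integral\<^sup>L ?\<nu> \<psi> / (2 * R)"
      unfolding avg_R_def set_lebesgue_integral_def \<psi>_def[abs_def] X_def by simp
    have "\<bar>avg_R ?\<nu> ?S (\<Phi> \<circ> F) R - avg_R ?\<nu> ?S \<Phi> R\<bar> = \<bar>integral\<^sup>L ?\<nu> \<phi> - integral\<^sup>L ?\<nu> \<psi>\<bar> / (2 * R)"
      unfolding e1 e2 using R by (simp add: diff_divide_distrib[symmetric])
    also have "\<dots> \<le> B * (4 * M) / (2 * R)" using bnd R by (intro divide_right_mono) auto
    also have "\<dots> = 2 * B * M / R" using R by (simp add: field_simps)
    finally show ?thesis .
  qed
  have "((\<lambda>R. avg_R ?\<nu> ?S (\<Phi> \<circ> F) R - avg_R ?\<nu> ?S \<Phi> R) \<longlongrightarrow> 0) at_top"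
  proof (rule Lim_null_comparison)
    show "\<forall>\<^sub>F R in at_top. norm (avg_R ?\<nu> ?S (\<Phi> \<circ> F) R - avg_R ?\<nu> ?S \<Phi> R) \<le> 2 * B * M / R"
      using eventually_gt_at_top[of "0::real"] by (rule eventually_mono) (simp add: key)
    show "((\<lambda>R. 2 * B * M / R) \<longlongrightarrow> 0) at_top"
      by (rule tendsto_divide_0[OF tendsto_const filterlim_at_top_imp_at_infinity[OF filterlim_ident]])
  qed
  from tendsto_add[OF lim this] have limF: "(avg_R ?\<nu> ?S (\<Phi> \<circ> F) \<longlongrightarrow> L0) at_top" by simp
  have gF: "global_observable ?\<nu> ?S (\<Phi> \<circ> F)"
    unfolding global_observable_def using \<Phi>Fm BF limF by (auto simp: comp_def)
  have "nu_av ?\<nu> ?S (\<Phi> \<circ> F) = L0" unfolding nu_av_def by (rule tendsto_Lim[OF _ limF]) simp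
  moreover have "nu_av ?\<nu> ?S \<Phi> = L0" unfolding nu_av_def by (rule tendsto_Lim[OF _ lim]) simp
  ultimately show ?thesis using gF unfolding F_def by simp
qed

end
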